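(* Let $\psi$ be a CNF formula with only positive literals, with clauses $C_1,\dots,C_m$ each consisting of three distinct variables, and variables $x_1,\dots,x_p$, in which every variable appears in at least $3$ clauses. Let $G$ be the graph constructed as follows: (1) for each variable $x_i$ create a cycle $D_i$ whose number of vertices equals the number of clauses containing $x_i$; (2) add a vertex $a$ adjacent to every vertex of all cycles $D_1,\dots,D_p$; (3) for each clause $\{x_i,x_j,x_k\}$ add a vertex $u_{ijk}$ adjacent to one vertex of each of $D_i,D_j,D_k$, choosing in each cycle a vertex not yet adjacent to any clause-vertex; (4) subdivide once every edge of the cycles $D_1,\dots,D_p$ and every edge incident to $a$. If $G$ has a $1/2$-shallow topological minor of density at least $\frac{5m}{2m+1}$, then $\psi$ has an assignment in which every clause contains exactly one true variable.
   Context: A graph $H$ is a $1/2$-shallow topological minor of $G$ if some graph obtained from $H$ by subdividing each edge at most once is isomorphic to a subgraph of $G$. The density of $H$ is $\|H\|/|H|$ (number of edges divided by number of vertices). *)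

theory Defs
  imports Complex_Main
begin

definition graph :: "'a set \<Rightarrow> 'a set set \<Rightarrow> bool" where
  "graph V E \<longleftrightarrow> finite V \<and>
     (\<forall>e\<in>E. \<exists>u v. u \<noteq> v \<and> e = {u, v} \<and> u \<in> V \<and> v \<in> V)"

definition density :: "'a set \<Rightarrow> 'a set set \<Rightarrow> real" where
  "density V E = real (card E) / real (card V)"

text \<open>(VH,EH) is a 1/2-shallow topological minor of (VG,EG): a graph obtained from H by
  subdividing each edge at most once (the edges in S are subdivided once, the others are
  kept) is isomorphic to a subgraph of G.  The isomorphism maps the original vertices via
  the injective map f and the subdivision vertex of an edge e in S to s e; subdivision
  vertices are pairwise distinct and distinct from the branch vertices.\<close>

definition half_shallow_top_minor ::
  "'h set \<Rightarrow> 'h set set \<Rightarrow> 'g set \<Rightarrow> 'g set set \<Rightarrow> bool" where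
  "half_shallow_top_minor VH EH VG EG \<longleftrightarrow> graph VH EH \<and>
     (\<exists>(f :: 'h \<Rightarrow> 'g) (s :: 'h set \<Rightarrow> 'g) S.
        S \<subseteq> EH \<and> inj_on f VH \<and> f ` VH \<subseteq> VG \<and>
        (\<forall>e\<in>EH - S. f ` e \<in> EG) \<and>
        inj_on s S \<and>
        (\<forall>e\<in>S. s e \<in> VG - f ` VH \<and> (\<forall>x\<in>e. {f x, s e} \<in> EG)))"

text \<open>Variables are 0..<p, clauses are the list C (clause j is the set C!j of variable
  indices).  For variable i, the cycle D_i has one vertex Cyc i j for each clause j
  containing x_i; this vertex is the one adjacent to the clause vertex Cl j.  The cyclic
  order of D_i is given by the list ord i (an enumeration of the clauses containing x_i).
  Apex is the vertex a; SA i j subdivides the edge a -- Cyc i j; SC i j subdivides the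
  cycle edge from Cyc i j to its successor on D_i.\<close>

datatype vtx = Apex | Cyc nat nat | Cl nat | SA nat nat | SC nat nat

definition occ :: "nat set list \<Rightarrow> nat \<Rightarrow> nat set" where
  "occ C i = {j. j < length C \<and> i \<in> C ! j}"

definition valid_orders :: "nat \<Rightarrow> nat set list \<Rightarrow> (nat \<Rightarrow> nat list) \<Rightarrow> bool" where
  "valid_orders p C ord \<longleftrightarrow> (\<forall>i<p. distinct (ord i) \<and> set (ord i) = occ C i)"

definition cverts :: "nat \<Rightarrow> nat set list \<Rightarrow> (nat \<Rightarrow> nat list) \<Rightarrow> vtx set" where
  "cverts p C ord =
     {Apex}
     \<union> {Cyc i j | i j. i < p \<and> j \<in> set (ord i)}
     \<union> {SA i j | i j. i < p \<and> j \<in> set (ord i)}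
     \<union> {SC i j | i j. i < p \<and> j \<in> set (ord i)}
     \<union> {Cl j | j. j < length C}"

definition cedges :: "nat \<Rightarrow> nat set list \<Rightarrow> (nat \<Rightarrow> nat list) \<Rightarrow> vtx set set" where
  "cedges p C ord =
     {{Apex, SA i j} | i j. i < p \<and> j \<in> set (ord i)}
     \<union> {{SA i j, Cyc i j} | i j. i < p \<and> j \<in> set (ord i)}
     \<union> {{Cyc i (ord i ! k), SC i (ord i ! k)} | i k. i < p \<and> k < length (ord i)}
     \<union> {{SC i (ord i ! k), Cyc i (ord i ! ((k + 1) mod length (ord i)))} | i k.
          i < p \<and> k < length (ord i)}
     \<union> {{Cl j, Cyc i j} | i j. j < length C \<and> i \<in> C ! j}"

end

theory Submission
  imports Defs
begin


lemma N_SC: "g \<in> cedges p C ord \<Longrightarrow> SC i j \<in> g \<Longrightarrow>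
   g = {Cyc i j, SC i j} \<or> (\<exists>k < length (ord i). i < p \<and> ord i ! k = j \<and> g = {SC i j, Cyc i (ord i ! ((k+1) mod length (ord i)))})"
  unfolding cedges_def by auto

lemma N_Cyc: "g \<in> cedges p C ord \<Longrightarrow> Cyc i j \<in> g \<Longrightarrow>
   g = {SA i j, Cyc i j} \<or> g = {Cyc i j, SC i j} \<or> g = {Cl j, Cyc i j} \<or>
   (\<exists>k < length (ord i). i < p \<and> ord i ! ((k+1) mod length (ord i)) = j \<and> g = {SC i (ord i ! k), Cyc i j})"
  unfolding cedges_def by auto

lemma mod_suc_inj: "(k1::nat) < n \<Longrightarrow> k2 < n \<Longrightarrow> (k1+1) mod n = (k2+1) mod n \<Longrightarrow> k1 = k2"
proof -
  assume a: "k1 < n" "k2 < n" "(k1+1) mod n = (k2+1) mod n"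
  have h: "\<And>k. k < n \<Longrightarrow> (k+1) mod n = (if k+1 = n then 0 else k+1)" by auto
  show ?thesis using a h[OF a(1)] h[OF a(2)] by (auto split: if_splits)
qed

lemma card_le1: "finite A \<Longrightarrow> (\<And>a b. a\<in>A \<Longrightarrow> b\<in>A \<Longrightarrow> a = b) \<Longrightarrow> card A \<le> 1"
  by (metis One_nat_def card_le_Suc0_iff_eq)

lemma K1: "distinct xs \<Longrightarrow> card {k. k < length xs \<and> xs ! k = j} \<le> 1"
  by (rule card_le1) (auto simp: nth_eq_iff_index_eq)

lemma K2: assumes a0: "distinct xs" shows "card {k. k < length xs \<and> xs ! ((k+1) mod length xs) = j} \<le> 1"
proof (rule card_le1)
  show "finite {k. k < length xs \<and> xs ! ((k+1) mod length xs) = j}" by simp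
  fix k1 k2 assume "k1 \<in> {k. k < length xs \<and> xs ! ((k+1) mod length xs) = j}"
     "k2 \<in> {k. k < length xs \<and> xs ! ((k+1) mod length xs) = j}"
  then have a: "k1 < length xs" "k2 < length xs"
    "xs ! ((k1+1) mod length xs) = xs ! ((k2+1) mod length xs)" by auto
  have b: "(k1+1) mod length xs < length xs" "(k2+1) mod length xs < length xs" using a(1) by (auto intro!: mod_less_divisor)
  have "(k1+1) mod length xs = (k2+1) mod length xs"
    using nth_eq_iff_index_eq[OF a0 b] a(3) by simp
  then show "k1 = k2" using mod_suc_inj a by blast
qed



lemma arithA:
  fixes E m k l s ob :: nat
  assumes h1: "2*E \<le> (s + k + l) + 4*k + 3*l + 2*s + 3*ob"
    and h2: "E*(2*m+1) \<ge> 5*m*(1+k+l+s+ob)"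
    and h3: "k \<le> 2*m + ob" and h4: "m \<ge> 3"
  shows "l = 0 \<and> s = 0 \<and> ob = 0 \<and> k = 2*m"
proof -
  have a: "(2*E)*(2*m+1) \<le> (5*k+4*l+3*s+3*ob)*(2*m+1)" using h1 by (intro mult_right_mono) auto
  have b: "(2*E)*(2*m+1) \<ge> 10*m*(1+k+l+s+ob)" using h2 by simp
  have c: "5*k+4*l+3*s+3*ob \<ge> 10*m + 2*m*l + 4*m*s + 4*m*ob"
    using a b by (simp add: algebra_simps)
  have d: "m*l \<ge> 3*l" "m*s \<ge> 3*s" "m*ob \<ge> 3*ob" using h4 by simp_all
  have "l = 0 \<and> s = 0 \<and> ob = 0" using c d h3 by linarith
  then show ?thesis using c h3 by simp
qed

lemma arithB:
  fixes E m n :: nat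
  assumes h1: "2*E \<le> 4*n" and h2: "E*(2*m+1) \<ge> 5*m*n" and h4: "m \<ge> 3"
  shows "n = 0"
proof -
  have a: "(2*E)*(2*m+1) \<le> (4*n)*(2*m+1)" using h1 by (intro mult_right_mono) auto
  have b: "(2*E)*(2*m+1) \<ge> 10*m*n" using h2 by simp
  have e1: "(4*n)*(2*m+1) = 8*(m*n) + 4*n" "10*m*n = 10*(m*n)" by (simp_all add: algebra_simps)
  have c0: "10*(m*n) \<le> 8*(m*n) + 4*n" using a b e1 by linarith
  have c: "4*n \<ge> 2*(m*n)" using c0 by linarith
  have d: "m*n \<ge> 3*n" using h4 by simp
  show ?thesis using c d by linarith
qed


locale LS =
  fixes p :: nat and C :: "nat set list" and ord :: "nat \<Rightarrow> nat list"
    and VH :: "'h set" and EH :: "'h set set" and f :: "'h \<Rightarrow> vtx" and s :: "'h set \<Rightarrow> vtx"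
    and S :: "'h set set"
  assumes clauses: "\<forall>j < length C. card (C ! j) = 3 \<and> C ! j \<subseteq> {..<p}"
    and ordv: "valid_orders p C ord"
    and gH: "graph VH EH"
    and SE: "S \<subseteq> EH" and injf: "inj_on f VH" and fV: "f ` VH \<subseteq> cverts p C ord"
    and nonsub: "\<forall>e\<in>EH - S. f ` e \<in> cedges p C ord"
    and injs: "inj_on s S"
    and sub: "\<forall>e\<in>S. s e \<in> cverts p C ord - f ` VH \<and> (\<forall>x\<in>e. {f x, s e} \<in> cedges p C ord)"
begin

definition gd where "gd e x = (if e \<in> S then {f x, s e} else f ` e)"
definition Used where "Used = (\<lambda>(e,x). (f x, gd e x)) ` Sigma EH (\<lambda>e. e)"
definition dg where "dg v = {g \<in> cedges p C ord. v \<in> g}"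
definition lost where "lost v = (\<exists>g\<in>dg v. (v,g) \<notin> Used)"
definition Uat where "Uat v = {d\<in>Used. fst d = v}"

lemma edgeH: "e \<in> EH \<Longrightarrow> \<exists>u v. u \<noteq> v \<and> e = {u,v} \<and> u \<in> VH \<and> v \<in> VH"
  using gH unfolding graph_def by blast

lemma finVH: "finite VH" using gH unfolding graph_def by blast

lemma finEH: "finite EH"
proof -
  have "EH \<subseteq> Pow VH" using edgeH by blast
  then show ?thesis using finVH by (meson finite_Pow_iff finite_subset)
qed

lemma other: "e \<in> EH \<Longrightarrow> x \<in> e \<Longrightarrow> \<exists>y. y \<noteq> x \<and> e = {x,y} \<and> x \<in> VH \<and> y \<in> VH"
proof -
  assume a: "e \<in> EH" "x \<in> e"
  obtain u v where uv: "u \<noteq> v" "e = {u,v}" "u \<in> VH" "v \<in> VH" using edgeH a(1) by blast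
  show ?thesis
  proof (cases "x = u")
    case True then show ?thesis using uv by (intro exI[of _ v]) auto
  next
    case False then have "x = v" using uv a by blast
    then show ?thesis using uv by (intro exI[of _ u]) (auto simp: insert_commute)
  qed
qed

lemma finE: "e \<in> EH \<Longrightarrow> finite e" by (drule edgeH) auto
lemma cardE: "e \<in> EH \<Longrightarrow> card e = 2" by (drule edgeH) auto

lemma gd_E: "e \<in> EH \<Longrightarrow> x \<in> e \<Longrightarrow> gd e x \<in> cedges p C ord \<and> f x \<in> gd e x"
  using nonsub sub unfolding gd_def by auto

lemma card_Used: "card Used = 2 * card EH"
proof -
  have inj: "inj_on (\<lambda>(e,x). (f x, gd e x)) (Sigma EH (\<lambda>e. e))"
  proof (rule inj_onI, clarsimp)
    fix e x e' x'
    assume a: "e \<in> EH" "x \<in> e" "e' \<in> EH" "x' \<in> e'" "f x = f x'" "gd e x = gd e' x'"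
    obtain y where y: "y \<noteq> x" "e = {x,y}" "x \<in> VH" "y \<in> VH" using other a by blast
    obtain y' where y': "y' \<noteq> x'" "e' = {x',y'}" "x' \<in> VH" "y' \<in> VH" using other a by blast
    have xx: "x = x'" using injf a y y' by (meson inj_onD)
    have fyx: "f y \<noteq> f x" using injf y by (meson inj_onD)
    have fyx': "f y' \<noteq> f x" using injf y' xx by (meson inj_onD)
    show "e = e' \<and> x = x'"
    proof (cases "e \<in> S")
      case True
      have sB: "s e \<notin> f ` VH" using sub True by blast
      show ?thesis
      proof (cases "e' \<in> S")
        case True2: True
        have "{f x, s e} = {f x, s e'}" using a(6) True True2 xx unfolding gd_def by simp
        moreover have "s e \<noteq> f x" using sB y by blast
        ultimately have "s e = s e'" by (metis doubleton_eq_iff)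
        then show ?thesis using injs True True2 xx by (meson inj_onD)
      next
        case False
        have "{f x, s e} = f ` e'" using a(6) True False xx unfolding gd_def by simp
        then have "s e \<in> f ` VH" using y' by auto
        then show ?thesis using sB by blast
      qed
    next
      case False
      show ?thesis
      proof (cases "e' \<in> S")
        case True2: True
        have sB: "s e' \<notin> f ` VH" using sub True2 by blast
        have "f ` e = {f x, s e'}" using a(6) False True2 xx unfolding gd_def by simp
        then have "s e' \<in> f ` VH" using y by auto
        then show ?thesis using sB by blast
      next
        case False2: False
        have "f ` e = f ` e'" using a(6) False False2 unfolding gd_def by simp
        then have "{f x, f y} = {f x, f y'}" using y y' xx by simp
        then have "f y = f y'" using fyx by (metis doubleton_eq_iff)
        then have "y = y'" using injf y y' by (meson inj_onD)
        then show ?thesis using y y' xx by simp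
      qed
    qed
  qed
  have "card Used = card (Sigma EH (\<lambda>e. e))" unfolding Used_def using inj card_image by blast
  also have "\<dots> = (\<Sum>e\<in>EH. card e)" using finEH finE
    by (subst card_SigmaI) auto
  also have "\<dots> = (\<Sum>e\<in>EH. 2)" by (rule sum.cong) (auto simp: cardE)
  finally show ?thesis by simp
qed

lemma finUsed: "finite Used" unfolding Used_def using finEH finE
  by (intro finite_imageI finite_SigmaI) auto

lemma Used_sub: "d \<in> Used \<Longrightarrow> fst d \<in> f ` VH \<and> snd d \<in> dg (fst d)"
  unfolding Used_def dg_def using gd_E other by fastforce

lemma via_sub: assumes "(v, {v,w}) \<in> Used" "w \<notin> f ` VH"
  shows "\<exists>e\<in>S. s e = w \<and> (\<exists>x\<in>e. f x = v) \<and> (\<exists>y\<in>e. f y \<noteq> v \<and> f y \<in> f ` VH \<and> {f y, w} \<in> cedges p C ord)"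
proof -
  obtain e x where a: "e \<in> EH" "x \<in> e" "v = f x" "{v,w} = gd e x" using assms(1) unfolding Used_def by auto
  obtain y where y: "y \<noteq> x" "e = {x,y}" "x \<in> VH" "y \<in> VH" using other a by blast
  have eS: "e \<in> S"
  proof (rule ccontr)
    assume "e \<notin> S"
    then have "{v,w} = f ` e" using a unfolding gd_def by simp
    then have "w \<in> f ` VH" using y by auto
    then show False using assms by blast
  qed
  have sB: "s e \<notin> f ` VH" using sub eS by blast
  have "{v,w} = {v, s e}" using a eS unfolding gd_def by simp
  moreover have "s e \<noteq> v" using sB a y by blast
  ultimately have sw: "s e = w" by (metis doubleton_eq_iff)
  have "f y \<noteq> v" using injf y a by (metis inj_onD)
  moreover have "{f y, w} \<in> cedges p C ord" using sub eS y sw by auto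
  ultimately show ?thesis using eS sw a y by blast
qed

end


lemma N_Apex: "g \<in> cedges p C ord \<Longrightarrow> Apex \<in> g \<Longrightarrow> \<exists>i j. g = {Apex, SA i j} \<and> i < p \<and> j \<in> set (ord i)"
  unfolding cedges_def by auto

lemma N_SA: "g \<in> cedges p C ord \<Longrightarrow> SA i j \<in> g \<Longrightarrow> g = {Apex, SA i j} \<or> g = {SA i j, Cyc i j}"
  unfolding cedges_def by auto

lemma N_Cl: "g \<in> cedges p C ord \<Longrightarrow> Cl j \<in> g \<Longrightarrow> \<exists>i. g = {Cl j, Cyc i j} \<and> i \<in> C ! j \<and> j < length C"
  unfolding cedges_def by auto

lemma sub_bound: "A \<subseteq> F \<Longrightarrow> finite F \<Longrightarrow> card F \<le> k \<Longrightarrow> finite A \<and> card A \<le> k"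
  by (meson card_mono finite_subset le_trans)

lemma card2: "card {a,b} \<le> 2" by (simp add: card_insert_if)
lemma card3: "card {a,b,c} \<le> 3" by (simp add: card_insert_if)

fun sa_of :: "vtx \<Rightarrow> vtx" where
  "sa_of (Cyc i j) = SA i j"
| "sa_of v = v"

definition isCyc where "isCyc v = (\<exists>i j. v = Cyc i j)"
definition isSA where "isSA v = (\<exists>i j. v = SA i j)"

context LS begin

lemma distinct_ord: "i < p \<Longrightarrow> distinct (ord i)" using ordv unfolding valid_orders_def by blast
lemma set_ord: "i < p \<Longrightarrow> set (ord i) = occ C i" using ordv unfolding valid_orders_def by blast

lemma dg_SA: "finite (dg (SA i j)) \<and> card (dg (SA i j)) \<le> 2"
proof -
  have "dg (SA i j) \<subseteq> {{Apex, SA i j}, {SA i j, Cyc i j}}" unfolding dg_def using N_SA by blast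
  then show ?thesis by (rule sub_bound) (simp_all add: card2)
qed

lemma dg_Cl: "finite (dg (Cl j)) \<and> card (dg (Cl j)) \<le> 3"
proof -
  let ?I = "{i. i \<in> C ! j \<and> j < length C}"
  have fin: "finite ?I \<and> card ?I \<le> 3"
  proof (cases "j < length C")
    case True
    then have "?I = C ! j" by auto
    moreover have "card (C ! j) = 3" using clauses True by blast
    ultimately show ?thesis by (metis card.infinite order_refl zero_neq_numeral)
  next
    case False then show ?thesis by simp
  qed
  have "dg (Cl j) \<subseteq> (\<lambda>i. {Cl j, Cyc i j}) ` ?I" unfolding dg_def using N_Cl by blast
  moreover have "finite ((\<lambda>i. {Cl j, Cyc i j}) ` ?I)" using fin by simp
  moreover have "card ((\<lambda>i. {Cl j, Cyc i j}) ` ?I) \<le> 3" using fin card_image_le[of ?I "\<lambda>i. {Cl j, Cyc i j}"] by linarith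
  ultimately show ?thesis by (rule sub_bound)
qed

lemma dg_SC: "finite (dg (SC i j)) \<and> card (dg (SC i j)) \<le> 3"
proof -
  let ?n = "length (ord i)"
  let ?K = "{k. i < p \<and> k < ?n \<and> ord i ! k = j}"
  have K: "finite ?K \<and> card ?K \<le> 1"
  proof (cases "i < p")
    case True then show ?thesis using K1[OF distinct_ord[OF True], of j] by simp
  next
    case False then show ?thesis by simp
  qed
  have "dg (SC i j) \<subseteq> {{Cyc i j, SC i j}} \<union> (\<lambda>k. {SC i j, Cyc i (ord i ! ((k+1) mod ?n))}) ` ?K"
  proof
    fix g assume "g \<in> dg (SC i j)"
    then have "g \<in> cedges p C ord" "SC i j \<in> g" unfolding dg_def by auto
    from N_SC[OF this] show "g \<in> {{Cyc i j, SC i j}} \<union> (\<lambda>k. {SC i j, Cyc i (ord i ! ((k+1) mod ?n))}) ` ?K"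
    proof (elim disjE exE conjE)
      fix k assume "k < length (ord i)" "i < p" "ord i ! k = j" "g = {SC i j, Cyc i (ord i ! ((k+1) mod ?n))}"
      then have "g \<in> (\<lambda>k. {SC i j, Cyc i (ord i ! ((k+1) mod ?n))}) ` ?K" by (intro image_eqI[of _ _ k]) auto
      then show ?thesis by (rule UnI2)
    qed auto
  qed
  moreover have "finite ({{Cyc i j, SC i j}} \<union> (\<lambda>k. {SC i j, Cyc i (ord i ! ((k+1) mod ?n))}) ` ?K)" using K by simp
  moreover have "card ({{Cyc i j, SC i j}} \<union> (\<lambda>k. {SC i j, Cyc i (ord i ! ((k+1) mod ?n))}) ` ?K) \<le> 3"
  proof -
    have "card ({{Cyc i j, SC i j}} \<union> (\<lambda>k. {SC i j, Cyc i (ord i ! ((k+1) mod ?n))}) ` ?K) \<le> card {{Cyc i j, SC i j}} + card ((\<lambda>k. {SC i j, Cyc i (ord i ! ((k+1) mod ?n))}) ` ?K)"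
      by (rule card_Un_le)
    also have "\<dots> \<le> 1 + 1"
    proof -
      have "card ((\<lambda>k. {SC i j, Cyc i (ord i ! ((k+1) mod ?n))}) ` ?K) \<le> 1" using K card_image_le[of ?K "\<lambda>k. {SC i j, Cyc i (ord i ! ((k+1) mod ?n))}"] by linarith
      then show ?thesis by simp
    qed
    finally show ?thesis by simp
  qed
  ultimately show ?thesis by (rule sub_bound)
qed

lemma dg_Cyc: "finite (dg (Cyc i j)) \<and> card (dg (Cyc i j)) \<le> 4"
proof -
  let ?n = "length (ord i)"
  let ?K = "{k. i < p \<and> k < ?n \<and> ord i ! ((k+1) mod ?n) = j}"
  have K: "finite ?K \<and> card ?K \<le> 1"
  proof (cases "i < p")
    case True then show ?thesis using K2[OF distinct_ord[OF True], of j] by simp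
  next
    case False then show ?thesis by simp
  qed
  let ?F = "{{SA i j, Cyc i j}, {Cyc i j, SC i j}, {Cl j, Cyc i j}} \<union> (\<lambda>k. {SC i (ord i ! k), Cyc i j}) ` ?K"
  have F1: "dg (Cyc i j) \<subseteq> ?F"
  proof
    fix g assume "g \<in> dg (Cyc i j)"
    then have "g \<in> cedges p C ord" "Cyc i j \<in> g" unfolding dg_def by auto
    from N_Cyc[OF this] show "g \<in> ?F"
    proof (elim disjE exE conjE)
      fix k assume "k < length (ord i)" "i < p" "ord i ! ((k+1) mod length (ord i)) = j" "g = {SC i (ord i ! k), Cyc i j}"
      then have "g \<in> (\<lambda>k. {SC i (ord i ! k), Cyc i j}) ` ?K" by (intro image_eqI[of _ _ k]) auto
      then show "g \<in> ?F" by (rule UnI2)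
    qed auto
  qed
  have F3: "card ?F \<le> 4"
  proof -
    have "card ?F \<le> card {{SA i j, Cyc i j}, {Cyc i j, SC i j}, {Cl j, Cyc i j}} + card ((\<lambda>k. {SC i (ord i ! k), Cyc i j}) ` ?K)"
      by (rule card_Un_le)
    also have "\<dots> \<le> 3 + 1"
    proof -
      have "card ((\<lambda>k. {SC i (ord i ! k), Cyc i j}) ` ?K) \<le> 1" using K card_image_le[of ?K "\<lambda>k. {SC i (ord i ! k), Cyc i j}"] by linarith
      then show ?thesis using card3[of "{SA i j, Cyc i j}" "{Cyc i j, SC i j}" "{Cl j, Cyc i j}"] by linarith
    qed
    finally show ?thesis by simp
  qed
  have F2: "finite ?F" using K by simp
  show ?thesis by (rule sub_bound[OF F1 F2 F3])
qed

end


context LS begin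

definition "SB = {v\<in>f`VH. isSA v}"
definition "CK = {v\<in>f`VH. isCyc v \<and> \<not> lost v}"
definition "CL = {v\<in>f`VH. isCyc v \<and> lost v}"
definition "OB = {v\<in>f`VH. v \<noteq> Apex \<and> \<not> isCyc v \<and> \<not> isSA v}"
definition "A0 = {v\<in>f`VH. v = Apex}"
definition "UX X = {d\<in>Used. fst d \<in> X}"

lemma finB: "finite (f ` VH)" using finVH by simp

lemma Uat_le: assumes "finite (dg v)" shows "card (Uat v) \<le> card (dg v)"
proof -
  have "Uat v \<subseteq> Pair v ` dg v" unfolding Uat_def using Used_sub by force
  moreover have "card (Pair v ` dg v) = card (dg v)" by (rule card_image) (simp add: inj_on_def)
  ultimately show ?thesis using assms by (metis card_mono finite_imageI)
qed

lemma Uat_lost: assumes "finite (dg v)" "lost v" shows "card (Uat v) < card (dg v)"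
proof -
  have "Uat v \<subseteq> Pair v ` dg v" unfolding Uat_def using Used_sub by force
  moreover obtain g where "g \<in> dg v" "(v,g) \<notin> Used" using assms(2) unfolding lost_def by blast
  ultimately have "Uat v \<subset> Pair v ` dg v" unfolding Uat_def by auto
  moreover have "card (Pair v ` dg v) = card (dg v)" by (rule card_image) (simp add: inj_on_def)
  ultimately show ?thesis using assms by (metis psubset_card_mono finite_imageI)
qed

lemma U_bound: assumes "finite X" "\<And>v. v \<in> X \<Longrightarrow> card (Uat v) \<le> K"
  shows "card (UX X) \<le> card X * K"
proof -
  have "UX X = (\<Union>v\<in>X. Uat v)" unfolding UX_def Uat_def by auto
  then have "card (UX X) \<le> (\<Sum>v\<in>X. card (Uat v))" using card_UN_le[OF assms(1)] by simp
  also have "\<dots> \<le> card X * K" using sum_bounded_above[of X "\<lambda>v. card (Uat v)" K] assms(2) by simp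
  finally show ?thesis .
qed

lemma Apex_bound: "card (Uat Apex) \<le> card SB + card CK + card CL"
proof -
  let ?CB = "{v\<in>f`VH. isCyc v}"
  have "Uat Apex \<subseteq> (\<lambda>v. (Apex, {Apex, v})) ` (SB \<union> sa_of ` ?CB)"
  proof
    fix d assume d: "d \<in> Uat Apex"
    then obtain g where dg: "d = (Apex, g)" "d \<in> Used" unfolding Uat_def by (cases d) auto
    then have "g \<in> dg Apex" using Used_sub by force
    then obtain i j where g: "g = {Apex, SA i j}" using N_Apex unfolding dg_def by blast
    have "SA i j \<in> SB \<union> sa_of ` ?CB"
    proof (cases "SA i j \<in> f ` VH")
      case True then show ?thesis unfolding SB_def isSA_def by auto
    next
      case False
      have "(Apex, {Apex, SA i j}) \<in> Used" using dg g by simp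
      from via_sub[OF this False] obtain y where y: "f y \<noteq> Apex" "f y \<in> f ` VH" "{f y, SA i j} \<in> cedges p C ord"
        by blast
      have "f y \<noteq> SA i j" using y False by metis
      from N_SA[OF y(3)] have "f y = Cyc i j" using y(1) \<open>f y \<noteq> SA i j\<close> by (auto simp: doubleton_eq_iff)
      then have "Cyc i j \<in> ?CB" using y unfolding isCyc_def by auto
      then have "sa_of (Cyc i j) \<in> sa_of ` ?CB" by (rule imageI)
      then show ?thesis by simp
    qed
    then show "d \<in> (\<lambda>v. (Apex, {Apex, v})) ` (SB \<union> sa_of ` ?CB)" using dg g by blast
  qed
  moreover have fin: "finite SB" "finite ?CB" using finB unfolding SB_def by auto
  ultimately have "card (Uat Apex) \<le> card (SB \<union> sa_of ` ?CB)"
    by (meson card_image_le card_mono finite_UnI finite_imageI le_trans)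
  also have "\<dots> \<le> card SB + card (sa_of ` ?CB)" by (rule card_Un_le)
  also have "\<dots> \<le> card SB + card ?CB" using card_image_le[OF fin(2), of sa_of] by simp
  also have "?CB = CK \<union> CL" unfolding CK_def CL_def by auto
  also have "card (CK \<union> CL) = card CK + card CL"
    by (rule card_Un_disjoint) (use finB in \<open>auto simp: CK_def CL_def\<close>)
  finally show ?thesis by simp
qed

end


context LS begin

lemma cardB: "card (f ` VH) = card A0 + card CK + card CL + card SB + card OB"
proof -
  have fin: "finite A0" "finite CK" "finite CL" "finite SB" "finite OB"
    using finB unfolding A0_def CK_def CL_def SB_def OB_def by auto
  have eq: "f ` VH = (((A0 \<union> CK) \<union> CL) \<union> SB) \<union> OB"
    unfolding A0_def CK_def CL_def SB_def OB_def isCyc_def isSA_def by auto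
  have "card ((((A0 \<union> CK) \<union> CL) \<union> SB) \<union> OB) = card (((A0 \<union> CK) \<union> CL) \<union> SB) + card OB"
    by (rule card_Un_disjoint) (use fin in \<open>auto simp: A0_def CK_def CL_def SB_def OB_def isCyc_def isSA_def\<close>)
  also have "card (((A0 \<union> CK) \<union> CL) \<union> SB) = card ((A0 \<union> CK) \<union> CL) + card SB"
    by (rule card_Un_disjoint) (use fin in \<open>auto simp: A0_def CK_def CL_def SB_def OB_def isCyc_def isSA_def\<close>)
  also have "card ((A0 \<union> CK) \<union> CL) = card (A0 \<union> CK) + card CL"
    by (rule card_Un_disjoint) (use fin in \<open>auto simp: A0_def CK_def CL_def SB_def OB_def isCyc_def isSA_def\<close>)
  also have "card (A0 \<union> CK) = card A0 + card CK"
    by (rule card_Un_disjoint) (use fin in \<open>auto simp: A0_def CK_def CL_def SB_def OB_def isCyc_def isSA_def\<close>)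
  finally show ?thesis using eq by simp
qed

lemma count_main:
  "2 * card EH \<le> (if Apex \<in> f ` VH then card SB + card CK + card CL else 0)
      + 4 * card CK + 3 * card CL + 2 * card SB + 3 * card OB"
proof -
  have fin: "finite A0" "finite CK" "finite CL" "finite SB" "finite OB"
    using finB unfolding A0_def CK_def CL_def SB_def OB_def by auto
  have eq: "Used = ((((UX A0 \<union> UX CK) \<union> UX CL) \<union> UX SB) \<union> UX OB)"
    unfolding UX_def A0_def CK_def CL_def SB_def OB_def isCyc_def isSA_def using Used_sub by auto
  have "card Used \<le> card (UX A0) + card (UX CK) + card (UX CL) + card (UX SB) + card (UX OB)"
    unfolding eq by (meson add_le_mono card_Un_le le_trans order_refl)
  moreover have "card (UX A0) \<le> (if Apex \<in> f ` VH then card SB + card CK + card CL else 0)"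
  proof (cases "Apex \<in> f ` VH")
    case True
    then have "UX A0 = Uat Apex" unfolding UX_def A0_def Uat_def using Used_sub by auto
    then show ?thesis using True Apex_bound by simp
  next
    case False
    then have "UX A0 = {}" unfolding UX_def A0_def by auto
    then show ?thesis by simp
  qed
  moreover have "card (UX CK) \<le> card CK * 4"
  proof (rule U_bound[OF fin(2)])
    fix v assume "v \<in> CK"
    then obtain i j where "v = Cyc i j" unfolding CK_def isCyc_def by auto
    then show "card (Uat v) \<le> 4" using dg_Cyc Uat_le le_trans by metis
  qed
  moreover have "card (UX CL) \<le> card CL * 3"
  proof (rule U_bound[OF fin(3)])
    fix v assume v: "v \<in> CL"
    then obtain i j where "v = Cyc i j" unfolding CL_def isCyc_def by auto
    moreover have "lost v" using v unfolding CL_def by auto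
    ultimately show "card (Uat v) \<le> 3" using dg_Cyc[of i j] Uat_lost[of v] by fastforce
  qed
  moreover have "card (UX SB) \<le> card SB * 2"
  proof (rule U_bound[OF fin(4)])
    fix v assume "v \<in> SB"
    then obtain i j where "v = SA i j" unfolding SB_def isSA_def by auto
    then show "card (Uat v) \<le> 2" using dg_SA Uat_le le_trans by metis
  qed
  moreover have "card (UX OB) \<le> card OB * 3"
  proof (rule U_bound[OF fin(5)])
    fix v assume v: "v \<in> OB"
    show "card (Uat v) \<le> 3"
    proof (cases v)
      case (Cl j) then show ?thesis using dg_Cl Uat_le le_trans by metis
    next
      case (SC i j) then show ?thesis using dg_SC Uat_le le_trans by metis
    qed (use v in \<open>auto simp: OB_def isCyc_def isSA_def\<close>)
  qed
  ultimately show ?thesis using card_Used by linarith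
qed

end


context LS begin

lemma Cyc_cverts: "Cyc i j \<in> cverts p C ord \<Longrightarrow> j < length C \<and> i \<in> C ! j"
proof -
  assume "Cyc i j \<in> cverts p C ord"
  then have "i < p" "j \<in> set (ord i)" unfolding cverts_def by auto
  then show ?thesis using set_ord unfolding occ_def by auto
qed

lemma Cl_edge: "j < length C \<Longrightarrow> i \<in> C ! j \<Longrightarrow> {Cl j, Cyc i j} \<in> cedges p C ord"
  unfolding cedges_def by blast

lemma Cl_two: assumes j: "j < length C" and nB: "Cl j \<notin> f ` VH"
  shows "card {i \<in> C ! j. Cyc i j \<in> CK} \<le> 2"
proof -
  let ?X = "{i \<in> C ! j. Cyc i j \<in> CK}"
  have key: "\<exists>e\<in>S. s e = Cl j \<and> (\<exists>x\<in>e. f x = Cyc i j)" if i: "i \<in> ?X" for i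
  proof -
    have iB: "Cyc i j \<in> f ` VH" "\<not> lost (Cyc i j)" using i unfolding CK_def by auto
    have "{Cl j, Cyc i j} \<in> dg (Cyc i j)" using Cl_edge[OF j] i unfolding dg_def by auto
    then have "(Cyc i j, {Cl j, Cyc i j}) \<in> Used" using iB unfolding lost_def by blast
    then have "(Cyc i j, {Cyc i j, Cl j}) \<in> Used" by (simp add: insert_commute)
    from via_sub[OF this nB] show ?thesis by blast
  qed
  show ?thesis
  proof (cases "?X = {}")
    case True then show ?thesis by (simp only: card.empty)
  next
    case False
    then obtain i0 where "i0 \<in> ?X" by blast
    then obtain e0 where e0: "e0 \<in> S" "s e0 = Cl j" using key by blast
    have sub: "(\<lambda>i. Cyc i j) ` ?X \<subseteq> f ` e0"
    proof
      fix v assume "v \<in> (\<lambda>i. Cyc i j) ` ?X"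
      then obtain i where i: "i \<in> ?X" "v = Cyc i j" by blast
      obtain e x where ex: "e \<in> S" "s e = Cl j" "x \<in> e" "f x = Cyc i j" using key[OF i(1)] by blast
      have "e = e0" using injs ex e0 by (metis inj_onD)
      then show "v \<in> f ` e0" using ex i by (metis image_eqI)
    qed
    have e0H: "e0 \<in> EH" using e0 SE by blast
    have "card ?X = card ((\<lambda>i. Cyc i j) ` ?X)" by (rule card_image[symmetric]) (simp add: inj_on_def)
    also have "\<dots> \<le> card (f ` e0)" using sub finE[OF e0H] by (simp add: card_mono)
    also have "\<dots> \<le> card e0" using finE[OF e0H] by (rule card_image_le)
    also have "\<dots> = 2" using cardE[OF e0H] .
    finally show ?thesis .
  qed
qed

lemma CK_sum: "card CK \<le> (\<Sum>j<length C. card {i \<in> C ! j. Cyc i j \<in> CK})"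
proof -
  define X where "X j = {i \<in> C ! j. Cyc i j \<in> CK}" for j
  have "CK \<subseteq> (\<Union>j\<in>{..<length C}. (\<lambda>i. Cyc i j) ` X j)"
  proof
    fix v assume v: "v \<in> CK"
    then obtain i j where ij: "v = Cyc i j" unfolding CK_def isCyc_def by auto
    have "Cyc i j \<in> cverts p C ord" using v ij fV unfolding CK_def by auto
    then have "j < length C \<and> i \<in> C ! j" by (rule Cyc_cverts)
    then show "v \<in> (\<Union>j\<in>{..<length C}. (\<lambda>i. Cyc i j) ` X j)" using v ij unfolding X_def by auto
  qed
  moreover have "finite (\<Union>j\<in>{..<length C}. (\<lambda>i. Cyc i j) ` X j)"
  proof -
    have "finite (X j)" if "j < length C" for j
    proof -
      have "card (C ! j) = 3" using clauses that by blast
      then have "finite (C ! j)" by (metis card.infinite zero_neq_numeral)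
      then show ?thesis unfolding X_def by simp
    qed
    then show ?thesis by auto
  qed
  ultimately have "card CK \<le> card (\<Union>j\<in>{..<length C}. (\<lambda>i. Cyc i j) ` X j)" by (rule card_mono[rotated])
  also have "\<dots> \<le> (\<Sum>j<length C. card ((\<lambda>i. Cyc i j) ` X j))" by (rule card_UN_le) simp
  also have "\<dots> \<le> (\<Sum>j<length C. card (X j))"
  proof (rule sum_mono)
    fix j assume j: "j \<in> {..<length C}"
    have "card (C ! j) = 3" using clauses j by auto
    then have fC: "finite (C ! j)" by (metis card.infinite zero_neq_numeral)
    show "card ((\<lambda>i. Cyc i j) ` X j) \<le> card (X j)" by (rule card_image_le) (simp add: X_def fC)
  qed
  finally show ?thesis unfolding X_def .
qed

lemma CK_le: "card CK \<le> 2 * length C + card OB"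
proof -
  define X where "X j = {i \<in> C ! j. Cyc i j \<in> CK}" for j
  have "CK \<subseteq> (\<Union>j\<in>{..<length C}. (\<lambda>i. Cyc i j) ` X j)"
  proof
    fix v assume v: "v \<in> CK"
    then obtain i j where ij: "v = Cyc i j" unfolding CK_def isCyc_def by auto
    have "Cyc i j \<in> cverts p C ord" using v ij fV unfolding CK_def by auto
    then have "j < length C \<and> i \<in> C ! j" by (rule Cyc_cverts)
    then show "v \<in> (\<Union>j\<in>{..<length C}. (\<lambda>i. Cyc i j) ` X j)" using v ij unfolding X_def by auto
  qed
  moreover have "finite (\<Union>j\<in>{..<length C}. (\<lambda>i. Cyc i j) ` X j)"
  proof -
    have "finite (X j)" if "j < length C" for j
    proof -
      have "card (C ! j) = 3" using clauses that by blast
      then have "finite (C ! j)" by (metis card.infinite zero_neq_numeral)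
      then show ?thesis unfolding X_def by simp
    qed
    then show ?thesis by auto
  qed
  ultimately have "card CK \<le> card (\<Union>j\<in>{..<length C}. (\<lambda>i. Cyc i j) ` X j)" by (rule card_mono[rotated])
  also have "\<dots> \<le> (\<Sum>j<length C. card ((\<lambda>i. Cyc i j) ` X j))" by (rule card_UN_le) simp
  also have "\<dots> \<le> (\<Sum>j<length C. 2 + (if Cl j \<in> f ` VH then 1 else 0))"
  proof (rule sum_mono)
    fix j assume j: "j \<in> {..<length C}"
    have c3: "card (C ! j) = 3" using clauses j by auto
    then have fC: "finite (C ! j)" by (metis card.infinite zero_neq_numeral)
    have "card ((\<lambda>i. Cyc i j) ` X j) \<le> card (X j)" by (rule card_image_le) (simp add: X_def fC)
    moreover have "card (X j) \<le> 3" unfolding X_def using c3 fC by (metis (no_types, lifting) card_mono mem_Collect_eq subsetI)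
    moreover have "Cl j \<notin> f ` VH \<Longrightarrow> card (X j) \<le> 2" unfolding X_def using Cl_two j by auto
    ultimately show "card ((\<lambda>i. Cyc i j) ` X j) \<le> 2 + (if Cl j \<in> f ` VH then 1 else 0)" by (auto split: if_splits)
  qed
  also have "\<dots> = 2 * length C + card {j \<in> {..<length C}. Cl j \<in> f ` VH}"
  proof -
    have "(\<Sum>j<length C. 2 + (if Cl j \<in> f ` VH then 1 else 0)) = (\<Sum>j<length C. (2::nat)) + (\<Sum>j<length C. (if Cl j \<in> f ` VH then 1 else 0))"
      by (rule sum.distrib)
    moreover have "(\<Sum>j<length C. (if Cl j \<in> f ` VH then 1 else (0::nat))) = (\<Sum>j\<in>{j \<in> {..<length C}. Cl j \<in> f ` VH}. 1)"
      by (rule sum.inter_filter[symmetric]) simp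
    ultimately show ?thesis by simp
  qed
  also have "card {j \<in> {..<length C}. Cl j \<in> f ` VH} \<le> card OB"
  proof -
    have "Cl ` {j \<in> {..<length C}. Cl j \<in> f ` VH} \<subseteq> OB" unfolding OB_def isCyc_def isSA_def by auto
    moreover have "finite OB" using finB unfolding OB_def by simp
    ultimately have "card (Cl ` {j \<in> {..<length C}. Cl j \<in> f ` VH}) \<le> card OB" by (rule card_mono[rotated])
    moreover have "card (Cl ` {j \<in> {..<length C}. Cl j \<in> f ` VH}) = card {j \<in> {..<length C}. Cl j \<in> f ` VH}"
      by (rule card_image) (simp add: inj_on_def)
    ultimately show ?thesis by simp
  qed
  finally show ?thesis by simp
qed

end


context LS begin

lemma SC_edge: "i < p \<Longrightarrow> k < length (ord i) \<Longrightarrow> {Cyc i (ord i ! k), SC i (ord i ! k)} \<in> cedges p C ord"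
  unfolding cedges_def by blast

lemma propag:
  assumes BB: "\<forall>v\<in>f ` VH. v = Apex \<or> v \<in> CK"
    and i: "i < p" and k: "k < length (ord i)" and inB: "Cyc i (ord i ! k) \<in> f ` VH"
  shows "Cyc i (ord i ! ((k+1) mod length (ord i))) \<in> f ` VH"
proof -
  let ?j = "ord i ! k"
  have "Cyc i ?j \<in> CK" using BB inB by auto
  then have nl: "\<not> lost (Cyc i ?j)" unfolding CK_def by auto
  have "{Cyc i ?j, SC i ?j} \<in> dg (Cyc i ?j)" using SC_edge[OF i k] unfolding dg_def by auto
  then have U: "(Cyc i ?j, {Cyc i ?j, SC i ?j}) \<in> Used" using nl unfolding lost_def by blast
  have nB: "SC i ?j \<notin> f ` VH"
  proof
    assume "SC i ?j \<in> f ` VH"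
    then have "SC i ?j \<in> CK" using BB by blast
    then show False unfolding CK_def isCyc_def by auto
  qed
  from via_sub[OF U nB] obtain y where y: "f y \<noteq> Cyc i ?j" "f y \<in> f ` VH" "{f y, SC i ?j} \<in> cedges p C ord"
    by blast
  have ySC: "f y \<noteq> SC i ?j" using y nB by metis
  have mem: "SC i ?j \<in> {f y, SC i ?j}" by simp
  from N_SC[OF y(3) mem] show ?thesis
  proof (elim disjE exE conjE)
    assume "{f y, SC i ?j} = {Cyc i ?j, SC i ?j}"
    then have "f y = Cyc i ?j" using ySC by (auto simp: doubleton_eq_iff)
    then show ?thesis using y by simp
  next
    fix k' assume k': "k' < length (ord i)" "i < p" "ord i ! k' = ?j"
      "{f y, SC i ?j} = {SC i ?j, Cyc i (ord i ! ((k'+1) mod length (ord i)))}"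
    have "k' = k" using k'(1,3) k distinct_ord[OF i] by (simp add: nth_eq_iff_index_eq)
    then have "f y = Cyc i (ord i ! ((k+1) mod length (ord i)))" using k'(4) ySC by (auto simp: doubleton_eq_iff)
    then show ?thesis using y by simp
  qed
qed

lemma all_or_none:
  assumes BB: "\<forall>v\<in>f ` VH. v = Apex \<or> v \<in> CK"
    and i: "i < p" and k0: "k0 < length (ord i)" and inB: "Cyc i (ord i ! k0) \<in> f ` VH"
    and k: "k < length (ord i)"
  shows "Cyc i (ord i ! k) \<in> f ` VH"
proof -
  let ?n = "length (ord i)"
  have n: "?n > 0" using k by linarith
  have all: "Cyc i (ord i ! ((k0 + d) mod ?n)) \<in> f ` VH" for d
  proof (induction d)
    case 0 then show ?case using inB k0 by simp
  next
    case (Suc d)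
    have "(k0 + d) mod ?n < ?n" using n by simp
    from propag[OF BB i this Suc] have "Cyc i (ord i ! (((k0 + d) mod ?n + 1) mod ?n)) \<in> f ` VH" .
    moreover have "((k0 + d) mod ?n + 1) mod ?n = (k0 + Suc d) mod ?n" by (simp add: mod_Suc_eq)
    ultimately show ?case by simp
  qed
  have "(k0 + (?n - k0 + k)) mod ?n = k" using k0 k by simp
  then show ?thesis using all[of "?n - k0 + k"] by simp
qed

lemma final:
  assumes m3: "length C \<ge> 3"
    and dens: "card EH * (2 * length C + 1) \<ge> 5 * length C * card VH"
    and pos: "card VH > 0"
  shows "\<exists>T \<subseteq> {..<p}. \<forall>j < length C. card (C ! j \<inter> T) = 1"
proof -
  let ?m = "length C"
  have cB: "card VH = card (f ` VH)" using injf by (simp add: card_image)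
  have Apex: "Apex \<in> f ` VH"
  proof (rule ccontr)
    assume nA: "Apex \<notin> f ` VH"
    then have "A0 = {}" unfolding A0_def by auto
    then have n: "card VH = card CK + card CL + card SB + card OB" using cardB cB by simp
    have "2 * card EH \<le> 4 * card VH" using count_main nA n by simp
    from arithB[OF this dens m3] pos show False by simp
  qed
  then have "A0 = {Apex}" unfolding A0_def by auto
  then have n: "card VH = 1 + card CK + card CL + card SB + card OB" using cardB cB by simp
  have h1: "2 * card EH \<le> (card SB + card CK + card CL) + 4 * card CK + 3 * card CL + 2 * card SB + 3 * card OB"
    using count_main Apex by simp
  have h2: "card EH * (2 * ?m + 1) \<ge> 5 * ?m * (1 + card CK + card CL + card SB + card OB)"
    using dens n by simp
  from arithA[OF h1 h2 CK_le m3] have z: "card CL = 0" "card SB = 0" "card OB = 0" "card CK = 2 * ?m" by auto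
  have fin: "finite CL" "finite SB" "finite OB" using finB unfolding CL_def SB_def OB_def by auto
  have e: "CL = {}" "SB = {}" "OB = {}" using z fin by auto
  have BB: "\<forall>v\<in>f ` VH. v = Apex \<or> v \<in> CK"
  proof
    fix v assume v: "v \<in> f ` VH"
    show "v = Apex \<or> v \<in> CK"
    proof (rule ccontr)
      assume "\<not> (v = Apex \<or> v \<in> CK)"
      then have "v \<in> CL \<or> v \<in> SB \<or> v \<in> OB" using v unfolding CK_def CL_def SB_def OB_def by auto
      then show False using e by auto
    qed
  qed
  have ClnB: "Cl j \<notin> f ` VH" for j using BB unfolding CK_def isCyc_def by fastforce
  define c where "c j = card {i \<in> C ! j. Cyc i j \<in> CK}" for j
  have c2: "c j \<le> 2" if "j < ?m" for j unfolding c_def using Cl_two[OF that ClnB] .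
  have ceq: "c j = 2" if j: "j < ?m" for j
  proof (rule ccontr)
    assume "c j \<noteq> 2"
    then have "c j < 2" using c2[OF j] by simp
    then have "(\<Sum>j<?m. c j) < (\<Sum>j<?m. 2)"
      using c2 j by (intro sum_strict_mono_ex1) auto
    moreover have "card CK \<le> (\<Sum>j<?m. c j)" using CK_sum unfolding c_def .
    ultimately show False using z by simp
  qed
  define T where "T = {i. i < p \<and> (\<exists>k < length (ord i). Cyc i (ord i ! k) \<notin> f ` VH)}"
  have Tchar: "i \<in> T \<longleftrightarrow> Cyc i j \<notin> f ` VH" if j: "j < ?m" and i: "i \<in> C ! j" for i j
  proof -
    have ip: "i < p" using clauses j i by auto
    have "j \<in> set (ord i)" using set_ord[OF ip] j i unfolding occ_def by auto
    then obtain kj where kj: "kj < length (ord i)" "ord i ! kj = j" by (metis in_set_conv_nth)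
    show ?thesis
    proof
      assume "i \<in> T"
      then obtain k where k: "k < length (ord i)" "Cyc i (ord i ! k) \<notin> f ` VH" unfolding T_def by auto
      show "Cyc i j \<notin> f ` VH"
      proof
        assume "Cyc i j \<in> f ` VH"
        then have "Cyc i (ord i ! k) \<in> f ` VH" using all_or_none[OF BB ip kj(1) _ k(1)] kj by simp
        then show False using k by simp
      qed
    next
      assume "Cyc i j \<notin> f ` VH"
      then show "i \<in> T" unfolding T_def using ip kj by auto
    qed
  qed
  have "T \<subseteq> {..<p}" unfolding T_def by auto
  moreover have "card (C ! j \<inter> T) = 1" if j: "j < ?m" for j
  proof -
    have c3: "card (C ! j) = 3" using clauses j by auto
    then have fC: "finite (C ! j)" by (metis card.infinite zero_neq_numeral)
    have CKB: "Cyc i j \<in> CK \<longleftrightarrow> Cyc i j \<in> f ` VH" for i using BB unfolding CK_def by auto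
    have "C ! j \<inter> T = C ! j - {i \<in> C ! j. Cyc i j \<in> CK}" using Tchar[OF j] CKB by auto
    then have "card (C ! j \<inter> T) = card (C ! j) - card {i \<in> C ! j. Cyc i j \<in> CK}"
      using fC by (simp add: card_Diff_subset)
    then show ?thesis using c3 ceq[OF j] unfolding c_def by simp
  qed
  ultimately show ?thesis by blast
qed

end

theorem lemma3:
  fixes p :: nat and C :: "nat set list" and ord :: "nat \<Rightarrow> nat list"
    and VH :: "'h set" and EH :: "'h set set"
  assumes clauses: "\<forall>j < length C. card (C ! j) = 3 \<and> C ! j \<subseteq> {..<p}"
    and occ3: "\<forall>i < p. card (occ C i) \<ge> 3"
    and ord: "valid_orders p C ord"
    and minor: "half_shallow_top_minor VH EH (cverts p C ord) (cedges p C ord)"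
    and dens: "density VH EH \<ge> 5 * real (length C) / (2 * real (length C) + 1)"
  shows "\<exists>T \<subseteq> {..<p}. \<forall>j < length C. card (C ! j \<inter> T) = 1"
proof (cases "length C = 0")
  case True then show ?thesis by (intro exI[of _ "{}"]) auto
next
  case False
  let ?m = "length C"
  have gH: "graph VH EH" using minor unfolding half_shallow_top_minor_def by (rule conjunct1)
  have ex: "\<exists>(f :: 'h \<Rightarrow> vtx) (s :: 'h set \<Rightarrow> vtx) S.
        S \<subseteq> EH \<and> inj_on f VH \<and> f ` VH \<subseteq> cverts p C ord \<and>
        (\<forall>e\<in>EH - S. f ` e \<in> cedges p C ord) \<and>
        inj_on s S \<and>
        (\<forall>e\<in>S. s e \<in> cverts p C ord - f ` VH \<and> (\<forall>x\<in>e. {f x, s e} \<in> cedges p C ord))"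
    using minor unfolding half_shallow_top_minor_def by (rule conjunct2)
  obtain f :: "'h \<Rightarrow> vtx" and s :: "'h set \<Rightarrow> vtx" and S where fs:
    "S \<subseteq> EH" "inj_on f VH" "f ` VH \<subseteq> cverts p C ord"
    "\<forall>e\<in>EH - S. f ` e \<in> cedges p C ord" "inj_on s S"
    "\<forall>e\<in>S. s e \<in> cverts p C ord - f ` VH \<and> (\<forall>x\<in>e. {f x, s e} \<in> cedges p C ord)"
    using ex by (elim exE conjE) (rule that; assumption)
  interpret LS p C ord VH EH f s S
    by unfold_locales (use clauses ord gH fs in auto)
  have m3: "?m \<ge> 3"
  proof -
    have "card (C ! 0) = 3" "C ! 0 \<subseteq> {..<p}" using clauses False by auto
    then obtain i where i: "i \<in> C ! 0" "i < p" by (metis card.empty ex_in_conv lessThan_iff subsetD zero_neq_numeral)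
    have "occ C i \<subseteq> {..<?m}" unfolding occ_def by auto
    then have "card (occ C i) \<le> ?m" by (metis card_lessThan card_mono finite_lessThan)
    moreover have "card (occ C i) \<ge> 3" using occ3 i by auto
    ultimately show ?thesis by simp
  qed
  have thr: "5 * real ?m / (2 * real ?m + 1) > 0"
  proof (rule divide_pos_pos)
    show "0 < 5 * real ?m" using False by simp
    show "0 < 2 * real ?m + 1" by simp
  qed
  have pos: "card VH > 0"
  proof (rule ccontr)
    assume "\<not> card VH > 0"
    then have "density VH EH = 0" unfolding density_def by simp
    then show False using dens thr by simp
  qed
  have "5 * real ?m / (2 * real ?m + 1) \<le> real (card EH) / real (card VH)"
    using dens unfolding density_def .
  then have "5 * real ?m * real (card VH) \<le> real (card EH) * (2 * real ?m + 1)"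
    using pos by (simp add: field_simps)
  then have "real (5 * ?m * card VH) \<le> real (card EH * (2 * ?m + 1))" by (simp only: of_nat_mult of_nat_add of_nat_numeral of_nat_1)
  then have "5 * ?m * card VH \<le> card EH * (2 * ?m + 1)" by (simp only: of_nat_le_iff)
  then show ?thesis using final[OF m3 _ pos] by simp
qed

end
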